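(* Let $(R,\mathfrak{m})$ be a Gorenstein local ring, let $q$ be a prime power and $k$ a positive integer. Suppose $\mathfrak{m}^2\neq(0)$, $\mathfrak{m}^3=(0)$, $|R/\mathfrak{m}|=q$, and $\dim_{R/\mathfrak{m}}(\mathfrak{m}/\mathfrak{m}^2)=k>6$. Then $\mathbb{AG}(R)$ contains a subgraph isomorphic to the complete bipartite graph $K_{k-6,3}$.
   Context: All rings are commutative with $1\neq 0$. A Noetherian local ring $(R,\mathfrak{m})$ is called Gorenstein if $\dim_{R/\mathfrak{m}}\operatorname{Ann}(\mathfrak{m})=1$. An ideal $I$ of $R$ is an annihilating-ideal if $IJ=(0)$ for some nonzero ideal $J$ of $R$. The annihilating-ideal graph $\mathbb{AG}(R)$ is the simple graph whose vertices are the nonzero annihilating-ideals of $R$, with distinct vertices $I,J$ adjacent iff $IJ=(0)$. *)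

theory Defs
  imports Main "HOL-Computational_Algebra.Primes"
begin

text \<open>Commutative rings with 1 \<noteq> 0 are modelled by the type class comm_ring_1
  (which includes 0 \<noteq> 1). Ideals are subsets of the carrier type.\<close>

definition is_ideal :: "'a::comm_ring_1 set \<Rightarrow> bool" where
  "is_ideal I \<longleftrightarrow> 0 \<in> I \<and> (\<forall>x\<in>I. \<forall>y\<in>I. x + y \<in> I) \<and> (\<forall>r x. x \<in> I \<longrightarrow> r * x \<in> I)"

definition ideal_gen :: "'a::comm_ring_1 set \<Rightarrow> 'a set" where
  "ideal_gen S = {\<Sum>x\<in>T. r x * x | T r. finite T \<and> T \<subseteq> S}"

definition ideal_prod :: "'a::comm_ring_1 set \<Rightarrow> 'a set \<Rightarrow> 'a set" where
  "ideal_prod I J = ideal_gen {x * y | x y. x \<in> I \<and> y \<in> J}"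

fun ideal_pow :: "'a::comm_ring_1 set \<Rightarrow> nat \<Rightarrow> 'a set" where
  "ideal_pow I 0 = UNIV"
| "ideal_pow I (Suc n) = ideal_prod I (ideal_pow I n)"

definition zero_ideal :: "'a::comm_ring_1 set" where
  "zero_ideal = {0}"

definition maximal_ideal :: "'a::comm_ring_1 set \<Rightarrow> bool" where
  "maximal_ideal M \<longleftrightarrow> is_ideal M \<and> M \<noteq> UNIV \<and>
     (\<forall>J. is_ideal J \<and> M \<subseteq> J \<longrightarrow> J = M \<or> J = UNIV)"

definition noetherian_ring :: "'a::comm_ring_1 itself \<Rightarrow> bool" where
  "noetherian_ring _ \<longleftrightarrow> (\<forall>I::'a set. is_ideal I \<longrightarrow> (\<exists>S. finite S \<and> I = ideal_gen S))"

definition noetherian_local :: "'a::comm_ring_1 set \<Rightarrow> bool" where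
  "noetherian_local M \<longleftrightarrow> noetherian_ring TYPE('a) \<and> maximal_ideal M \<and>
     (\<forall>M'. maximal_ideal M' \<longrightarrow> M' = M)"

definition residue_field :: "'a::comm_ring_1 set \<Rightarrow> 'a set set" where
  "residue_field M = UNIV // {(x, y). x - y \<in> M}"

definition annihilator :: "'a::comm_ring_1 set \<Rightarrow> 'a set" where
  "annihilator I = {x. \<forall>y\<in>I. x * y = 0}"

text \<open>Dimension over R/M of N/L, where L \<subseteq> N are R-submodules (ideals) with M N \<subseteq> L,
  so that N/L is an R/M-vector space: the least number of elements of N whose images
  span N/L (R-linear spans and R/M-linear spans of N/L coincide).\<close>
definition res_dim :: "'a::comm_ring_1 set \<Rightarrow> 'a set \<Rightarrow> nat" where
  "res_dim N L = (LEAST n. \<exists>S. finite S \<and> card S = n \<and> S \<subseteq> N \<and> ideal_gen (S \<union> L) = N)"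

definition gorenstein_local :: "'a::comm_ring_1 set \<Rightarrow> bool" where
  "gorenstein_local M \<longleftrightarrow> noetherian_local M \<and> res_dim (annihilator M) {0} = 1"

definition annihilating_ideal :: "'a::comm_ring_1 set \<Rightarrow> bool" where
  "annihilating_ideal I \<longleftrightarrow> is_ideal I \<and>
     (\<exists>J. is_ideal J \<and> J \<noteq> {0} \<and> ideal_prod I J = {0})"

definition AG_vertex :: "'a::comm_ring_1 set \<Rightarrow> bool" where
  "AG_vertex I \<longleftrightarrow> annihilating_ideal I \<and> I \<noteq> {0}"

definition AG_adj :: "'a::comm_ring_1 set \<Rightarrow> 'a set \<Rightarrow> bool" where
  "AG_adj I J \<longleftrightarrow> AG_vertex I \<and> AG_vertex J \<and> I \<noteq> J \<and> ideal_prod I J = {0}"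

definition AG_contains_Kab :: "'a::comm_ring_1 itself \<Rightarrow> nat \<Rightarrow> nat \<Rightarrow> bool" where
  "AG_contains_Kab _ a b \<longleftrightarrow> (\<exists>X Y :: 'a set set. finite X \<and> finite Y \<and> card X = a \<and> card Y = b \<and>
      X \<inter> Y = {} \<and> (\<forall>I\<in>X \<union> Y. AG_vertex I) \<and> (\<forall>I\<in>X. \<forall>J\<in>Y. AG_adj I J))"

end

theory Submission imports Defs begin

lemma gen_sub: "S \<subseteq> ideal_gen S"
proof
  fix x assume "x \<in> S"
  then show "x \<in> ideal_gen S" unfolding ideal_gen_def
    by (intro CollectI exI[of _ "{x}"] exI[of _ "\<lambda>_. 1"]) auto
qed

lemma ideal_sum: assumes "is_ideal I" "finite T" "\<forall>x\<in>T. f x \<in> I" shows "sum f T \<in> I"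
  using assms(2,3) by (induction T rule: finite_induct) (use assms(1) in \<open>auto simp: is_ideal_def\<close>)

lemma ideal_diff: assumes a: "is_ideal I" "x \<in> I" "y \<in> I" shows "x - y \<in> I"
proof -
  have "(-1) * y \<in> I" using a(1) a(3) unfolding is_ideal_def by blast
  then have "- y \<in> I" by simp
  then have "x + - y \<in> I" using a unfolding is_ideal_def by blast
  then show ?thesis by simp
qed

lemma gen_least: "is_ideal I \<Longrightarrow> S \<subseteq> I \<Longrightarrow> ideal_gen S \<subseteq> I"
  unfolding ideal_gen_def
  by (auto intro!: ideal_sum) (auto simp: is_ideal_def)

lemma gen_ideal: "is_ideal (ideal_gen S)"
  unfolding is_ideal_def
proof (intro conjI ballI allI impI)
  show "0 \<in> ideal_gen S" unfolding ideal_gen_def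
    by (intro CollectI exI[of _ "{}"]) auto
next
  fix x y assume "x \<in> ideal_gen S" "y \<in> ideal_gen S"
  then obtain T1 r1 T2 r2 where t: "finite T1" "T1 \<subseteq> S" "x = (\<Sum>x\<in>T1. r1 x * x)"
     "finite T2" "T2 \<subseteq> S" "y = (\<Sum>x\<in>T2. r2 x * x)"
    unfolding ideal_gen_def by blast
  define r where "r = (\<lambda>x. (if x \<in> T1 then r1 x else 0) + (if x \<in> T2 then r2 x else 0))"
  have "(\<Sum>v\<in>T1 \<union> T2. r v * v) = (\<Sum>v\<in>T1 \<union> T2. (if v \<in> T1 then r1 v * v else 0))
     + (\<Sum>v\<in>T1 \<union> T2. (if v \<in> T2 then r2 v * v else 0))"
    unfolding r_def sum.distrib[symmetric] by (rule sum.cong) (auto simp: distrib_right)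
  also have "\<dots> = x + y"
  proof -
    have "(\<Sum>v\<in>T1 \<union> T2. (if v \<in> T1 then r1 v * v else 0)) = (\<Sum>v\<in>T1. r1 v * v)"
      using t by (intro sum.mono_neutral_cong_right) auto
    moreover have "(\<Sum>v\<in>T1 \<union> T2. (if v \<in> T2 then r2 v * v else 0)) = (\<Sum>v\<in>T2. r2 v * v)"
      using t by (intro sum.mono_neutral_cong_right) auto
    ultimately show ?thesis using t by simp
  qed
  finally show "x + y \<in> ideal_gen S" unfolding ideal_gen_def using t
    by (intro CollectI exI[of _ "T1 \<union> T2"] exI[of _ r]) auto
next
  fix c x assume "x \<in> ideal_gen S"
  then obtain T r where t: "finite T" "T \<subseteq> S" "x = (\<Sum>x\<in>T. r x * x)"
    unfolding ideal_gen_def by blast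
  have "c * x = (\<Sum>v\<in>T. (c * r v) * v)" using t by (simp add: sum_distrib_left mult.assoc)
  then show "c * x \<in> ideal_gen S" unfolding ideal_gen_def using t
    by (intro CollectI exI[of _ T] exI[of _ "\<lambda>v. c * r v"]) auto
qed

lemma gen_mono: "S \<subseteq> T \<Longrightarrow> ideal_gen S \<subseteq> ideal_gen T"
  by (meson gen_ideal gen_least gen_sub order_trans)

lemma gen_zero: "G \<subseteq> {0} \<Longrightarrow> ideal_gen G = {0}"
proof -
  assume "G \<subseteq> {0}"
  then have "ideal_gen G \<subseteq> {0}" by (intro gen_least) (auto simp: is_ideal_def)
  moreover have "0 \<in> ideal_gen G" using gen_ideal is_ideal_def by blast
  ultimately show ?thesis by blast
qed

lemma gen_id: "is_ideal I \<Longrightarrow> ideal_gen I = I"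
  by (simp add: gen_least gen_sub subset_antisym)


lemma principal_ideal: "is_ideal {c * z | c. True}" unfolding is_ideal_def
  proof (intro conjI ballI allI impI)
    show "0 \<in> {c * z | c. True}" by (intro CollectI exI[of _ 0]) simp
  next
    fix x y assume "x \<in> {c * z | c. True}" "y \<in> {c * z | c. True}"
    then obtain a b where "x = a * z" "y = b * z" by blast
    then show "x + y \<in> {c * z | c. True}" by (intro CollectI exI[of _ "a + b"]) (simp add: distrib_right)
  next
    fix r x assume "x \<in> {c * z | c. True}"
    then obtain a where "x = a * z" by blast
    then show "r * x \<in> {c * z | c. True}" by (intro CollectI exI[of _ "r * a"]) (simp add: mult.assoc)
  qed

lemma gen_mult: assumes "\<forall>x\<in>S. \<exists>c. x = c * z" "w \<in> ideal_gen S" shows "\<exists>c. w = c * z"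
proof -
  have "is_ideal {c * z | c. True}" unfolding is_ideal_def
  proof (intro conjI ballI allI impI)
    show "0 \<in> {c * z | c. True}" by (intro CollectI exI[of _ 0]) simp
  next
    fix x y assume "x \<in> {c * z | c. True}" "y \<in> {c * z | c. True}"
    then obtain a b where "x = a * z" "y = b * z" by blast
    then show "x + y \<in> {c * z | c. True}" by (intro CollectI exI[of _ "a + b"]) (simp add: distrib_right)
  next
    fix r x assume "x \<in> {c * z | c. True}"
    then obtain a where "x = a * z" by blast
    then show "r * x \<in> {c * z | c. True}" by (intro CollectI exI[of _ "r * a"]) (simp add: mult.assoc)
  qed
  then have "ideal_gen S \<subseteq> {c * z | c. True}" using assms(1) by (intro gen_least) auto
  then show ?thesis using assms(2) by auto
qed

theorem lemma2p8:
  fixes M :: "'a::comm_ring_1 set" and q k :: nat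
  assumes "gorenstein_local M"
    and "\<exists>(p::nat) n. prime p \<and> n \<ge> 1 \<and> q = p ^ n"
    and "k > 0"
    and "ideal_pow M 2 \<noteq> {0}"
    and "ideal_pow M 3 = {0}"
    and "card (residue_field M) = q"
    and "res_dim M (ideal_pow M 2) = k"
    and "k > 6"
  shows "AG_contains_Kab TYPE('a) (k - 6) 3"
proof -
  define M2 where "M2 = ideal_pow M 2"
  have nl: "noetherian_local M" and gor: "res_dim (annihilator M) {0} = 1"
    using assms(1) unfolding gorenstein_local_def by blast+
  have maxM: "maximal_ideal M" using nl unfolding noetherian_local_def by blast
  have nr: "noetherian_ring TYPE('a)" using nl unfolding noetherian_local_def by blast
  have noeth: "\<exists>S. finite S \<and> I = ideal_gen S" if "is_ideal I" for I :: "'a set"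
    using nr that unfolding noetherian_ring_def by blast
  have idM: "is_ideal M" using maxM unfolding maximal_ideal_def by blast
  have Mmul: "r * x \<in> M" if "x \<in> M" for r x using idM that unfolding is_ideal_def by blast
  have Madd: "x + y \<in> M" if "x \<in> M" "y \<in> M" for x y using idM that unfolding is_ideal_def by blast
  have Mmul2: "x * r \<in> M" if "x \<in> M" for r x using Mmul[OF that, of r] by (metis mult.commute)
  have M0: "0 \<in> M" using idM unfolding is_ideal_def by blast
  have MU: "ideal_prod M UNIV = M"
  proof
    show "ideal_prod M UNIV \<subseteq> M" unfolding ideal_prod_def
      by (rule gen_least[OF idM]) (blast intro: Mmul2)
    show "M \<subseteq> ideal_prod M UNIV" unfolding ideal_prod_def
    proof
      fix x assume "x \<in> M"
      then have "x \<in> {x * y |x y. x \<in> M \<and> y \<in> UNIV}" by (metis (mono_tags, lifting) CollectI UNIV_I mult_1_right)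
      then show "x \<in> ideal_gen {x * y |x y. x \<in> M \<and> y \<in> UNIV}" by (rule gen_sub[THEN subsetD])
    qed
  qed
  have M2def: "M2 = ideal_gen {x * y | x y. x \<in> M \<and> y \<in> M}"
    unfolding M2_def by (simp only: numeral_2_eq_2 ideal_pow.simps MU) (simp add: ideal_prod_def)
  have idM2: "is_ideal M2" unfolding M2def by (rule gen_ideal)
  have M2M: "M2 \<subseteq> M" unfolding M2def by (rule gen_least[OF idM]) (auto simp: Mmul)
  have mulM2: "x * y \<in> M2" if "x \<in> M" "y \<in> M" for x y
    unfolding M2def using that by (intro gen_sub[THEN subsetD]) blast
  have ann: "m * w = 0" if "m \<in> M" "w \<in> M2" for m w
  proof -
    have "ideal_pow M 3 = ideal_prod M M2" unfolding M2_def by (simp add: numeral_3_eq_3 numeral_2_eq_2)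
    then have "m * w \<in> ideal_pow M 3" unfolding ideal_prod_def using that by (auto intro!: gen_sub[THEN subsetD])
    then show ?thesis using assms(5) by simp
  qed
  have M2ne: "M2 \<noteq> {0}" using assms(4) M2_def by simp
  have idAnn: "is_ideal (annihilator M)" unfolding is_ideal_def annihilator_def
    by (simp add: distrib_right mult.assoc)
  obtain z where Annz: "annihilator M = ideal_gen {z, 0}"
  proof -
    define P where "P n = (\<exists>S. finite S \<and> card S = n \<and> S \<subseteq> annihilator M \<and> ideal_gen (S \<union> {0}) = annihilator M)" for n
    obtain S0 where S0: "finite S0" "annihilator M = ideal_gen S0" using noeth[OF idAnn] by blast
    have "ideal_gen (S0 \<union> {0}) = annihilator M"
    proof
      show "ideal_gen (S0 \<union> {0}) \<subseteq> annihilator M"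
        using S0 gen_sub idAnn gen_least unfolding is_ideal_def by (metis Un_least empty_subsetI insert_subset)
      show "annihilator M \<subseteq> ideal_gen (S0 \<union> {0})" using S0 gen_mono by blast
    qed
    then have "P (card S0)" unfolding P_def using S0 gen_sub by blast
    then have "P (LEAST n. P n)" by (rule LeastI)
    moreover have "(LEAST n. P n) = 1" using gor unfolding res_dim_def P_def by simp
    ultimately obtain S where "card S = 1" "ideal_gen (S \<union> {0}) = annihilator M" unfolding P_def by auto
    then obtain z where "S = {z}" by (meson card_1_singletonE)
    then have "ideal_gen {z, 0} = annihilator M" using \<open>ideal_gen (S \<union> {0}) = annihilator M\<close> by (simp add: insert_commute)
    then show ?thesis by (rule that[OF sym])
  qed
  have zAnn: "z \<in> annihilator M" using Annz gen_sub by blast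
  have zM: "z * m = 0" "m * z = 0" if "m \<in> M" for m using zAnn that unfolding annihilator_def
    by (auto simp: mult.commute)
  have Annform: "\<exists>c. w = c * z" if "w \<in> annihilator M" for w
  proof -
    have "\<forall>x\<in>{z,0}. \<exists>c. x = c * z" by (metis insert_iff empty_iff mult_1_left mult_zero_left)
    then show ?thesis using gen_mult[of "{z,0}" z w] that Annz by blast
  qed
  have M2Ann: "M2 \<subseteq> annihilator M" unfolding annihilator_def by auto (metis ann mult.commute)
  have unit: "\<exists>s m. m \<in> M \<and> s * c + m = 1" if "c \<notin> M" for c
  proof -
    define J where "J = {m + s * c | m s. m \<in> M}"
    have "is_ideal J" unfolding is_ideal_def J_def
    proof (intro conjI ballI allI impI)
      show "0 \<in> {m + s * c |m s. m \<in> M}" using M0 by (intro CollectI exI[of _ 0]) auto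
    next
      fix x y assume "x \<in> {m + s * c |m s. m \<in> M}" "y \<in> {m + s * c |m s. m \<in> M}"
      then obtain m1 s1 m2 s2 where "x = m1 + s1 * c" "y = m2 + s2 * c" "m1 \<in> M" "m2 \<in> M" by blast
      then show "x + y \<in> {m + s * c |m s. m \<in> M}" using Madd
        by (intro CollectI exI[of _ "m1 + m2"] exI[of _ "s1 + s2"]) (auto simp: algebra_simps)
    next
      fix r x assume "x \<in> {m + s * c |m s. m \<in> M}"
      then obtain m1 s1 where "x = m1 + s1 * c" "m1 \<in> M" by blast
      then show "r * x \<in> {m + s * c |m s. m \<in> M}" using Mmul
        by (intro CollectI exI[of _ "r * m1"] exI[of _ "r * s1"]) (auto simp: algebra_simps)
    qed
    moreover have "M \<subseteq> J"
    proof
      fix x assume "x \<in> M" then show "x \<in> J" unfolding J_def by (intro CollectI exI[of _ x] exI[of _ 0]) simp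
    qed
    moreover have "c \<in> J" unfolding J_def using M0 by (intro CollectI exI[of _ 0] exI[of _ 1]) simp
    ultimately have "J = UNIV" using maxM that unfolding maximal_ideal_def by blast
    then have "1 \<in> J" by simp
    then obtain m s where "1 = m + s * c" "m \<in> M" unfolding J_def by blast
    then show ?thesis by (metis add.commute)
  qed
  define sp where "sp S = ideal_gen (S \<union> M2)" for S
  have sp_ideal: "is_ideal (sp S)" for S unfolding sp_def by (rule gen_ideal)
  have sp_sub: "S \<subseteq> sp S" "M2 \<subseteq> sp S" for S unfolding sp_def using gen_sub by blast+
  have sp_M: "sp S \<subseteq> M" if "S \<subseteq> M" for S unfolding sp_def using that M2M by (intro gen_least[OF idM]) auto
  have sp_mono: "sp S \<subseteq> sp T" if "S \<subseteq> T" for S T unfolding sp_def using that by (intro gen_mono) auto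
  have sp_add: "a + b \<in> sp S" if "a \<in> sp S" "b \<in> sp S" for a b S
    using sp_ideal[of S] that unfolding is_ideal_def by blast
  have sp_mul: "r * a \<in> sp S" if "a \<in> sp S" for a r S
    using sp_ideal[of S] that unfolding is_ideal_def by blast
  have F: "\<exists>x\<in>M. x \<notin> sp S" if "finite S" "S \<subseteq> M" "card S < k" for S
  proof -
    define P where "P n = (\<exists>S. finite S \<and> card S = n \<and> S \<subseteq> M \<and> ideal_gen (S \<union> M2) = M)" for n
    obtain S0 where S0: "finite S0" "M = ideal_gen S0" using noeth[OF idM] by blast
    have S0M: "S0 \<subseteq> M" using S0 gen_sub by blast
    have "ideal_gen (S0 \<union> M2) = M"
    proof
      show "ideal_gen (S0 \<union> M2) \<subseteq> M" using S0M M2M by (intro gen_least[OF idM]) auto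
      show "M \<subseteq> ideal_gen (S0 \<union> M2)" using S0 gen_mono by blast
    qed
    then have "P (card S0)" unfolding P_def using S0 S0M by blast
    have k: "k = (LEAST n. P n)" using assms(7) unfolding res_dim_def P_def M2_def by simp
    have "\<not> P (card S)" using not_less_Least[of "card S" P] that(3) k by simp
    then have "sp S \<noteq> M" unfolding P_def sp_def using that by blast
    then show ?thesis using sp_M[OF that(2)] by blast
  qed
  have L1: "\<exists>u\<in>N. \<forall>x\<in>N. \<exists>t. x - t * u \<in> N \<and> (x - t * u) * y = 0"
    if "y \<in> M" "N \<subseteq> M" "0 \<in> N" "\<forall>x\<in>N. \<forall>r. r * x \<in> N" "\<forall>a\<in>N. \<forall>b\<in>N. a - b \<in> N" for N y
  proof (cases "\<forall>x\<in>N. x * y = 0")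
    case True
    then show ?thesis using that(3) by (intro bexI[of _ 0]) (auto intro: exI[of _ 0])
  next
    case False
    then obtain u where u: "u \<in> N" "u * y \<noteq> 0" by blast
    have "u * y \<in> annihilator M" using M2Ann mulM2 u(1) that(1,2) by blast
    then obtain c where c: "u * y = c * z" using Annform by blast
    have "c \<notin> M" using zM c u(2) by (metis mult.commute)
    then obtain s m where sm: "m \<in> M" "s * c + m = 1" using unit by blast
    have mz: "m * z = 0" using zM sm(1) by blast
    show ?thesis
    proof (intro bexI[of _ u] ballI)
      fix x assume x: "x \<in> N"
      have "x * y \<in> annihilator M" using M2Ann mulM2 x that(1,2) by blast
      then obtain a where a: "x * y = a * z" using Annform by blast
      have "(x - (s * a) * u) * y = a * z - a * (s * c) * z"
        using a c by (simp add: algebra_simps)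
      also have "\<dots> = a * (m * z)"
      proof -
        have sc: "s * c = 1 - m" using sm(2) by (simp add: eq_diff_eq)
        show ?thesis unfolding sc by (simp add: algebra_simps)
      qed
      also have "\<dots> = 0" using mz by simp
      finally have "(x - (s * a) * u) * y = 0" .
      moreover have "x - (s * a) * u \<in> N" using that(4,5) x u(1) by blast
      ultimately show "\<exists>t. x - t * u \<in> N \<and> (x - t * u) * y = 0" by blast
    qed (use u in blast)
  qed
  have Mdiff: "a - b \<in> M" if "a \<in> M" "b \<in> M" for a b using ideal_diff[OF idM that] .
  have L: "\<exists>x\<in>M. x * y2 = 0 \<and> x * y3 = 0 \<and> x \<notin> sp S"
    if S: "finite S" "S \<subseteq> M" "card S + 2 < k" and y: "y2 \<in> M" "y3 \<in> M" for S y2 y3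
  proof (rule ccontr)
    assume nex: "\<not> ?thesis"
    define N1 where "N1 = {x\<in>M. x * y2 = 0}"
    define N2 where "N2 = {x\<in>N1. x * y3 = 0}"
    have N2sp: "N2 \<subseteq> sp S" using nex unfolding N2_def N1_def by blast
    obtain u2 where u2: "u2 \<in> M" "\<forall>x\<in>M. \<exists>t. x - t * u2 \<in> M \<and> (x - t * u2) * y2 = 0"
      using L1[of y2 M] y(1) M0 Mmul Mdiff by blast
    have N1M: "N1 \<subseteq> M" unfolding N1_def by blast
    have N10: "0 \<in> N1" unfolding N1_def using M0 by simp
    have N1mul: "\<forall>x\<in>N1. \<forall>r. r * x \<in> N1" unfolding N1_def using Mmul by (simp add: mult.assoc)
    have N1diff: "\<forall>a\<in>N1. \<forall>b\<in>N1. a - b \<in> N1" unfolding N1_def using Mdiff by (simp add: left_diff_distrib)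
    obtain u3 where u3: "u3 \<in> N1" "\<forall>x\<in>N1. \<exists>t. x - t * u3 \<in> N1 \<and> (x - t * u3) * y3 = 0"
      using L1[of y3 N1] y(2) N1M N10 N1mul N1diff by blast
    define S' where "S' = insert u2 (insert u3 S)"
    have S'M: "S' \<subseteq> M" unfolding S'_def using u2 u3 N1M S by blast
    have fS': "finite S'" unfolding S'_def using S by simp
    have cS': "card S' < k" unfolding S'_def 
    proof -
      have "card (insert u2 (insert u3 S)) \<le> card S + 2" using S(1) by (simp add: card_insert_if)
      then show "card (insert u2 (insert u3 S)) < k" using S(3) by linarith
    qed
    have "M \<subseteq> sp S'"
    proof
      fix x assume x: "x \<in> M"
      obtain t2 where t2: "x - t2 * u2 \<in> M" "(x - t2 * u2) * y2 = 0" using u2 x by blast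
      then have x1: "x - t2 * u2 \<in> N1" unfolding N1_def by simp
      obtain t3 where t3: "(x - t2 * u2) - t3 * u3 \<in> N1" "((x - t2 * u2) - t3 * u3) * y3 = 0" using u3 x1 by blast
      then have "(x - t2 * u2) - t3 * u3 \<in> N2" unfolding N2_def by simp
      then have "(x - t2 * u2) - t3 * u3 \<in> sp S'" using N2sp sp_mono[of S S'] unfolding S'_def by blast
      moreover have "u2 \<in> sp S'" "u3 \<in> sp S'" using sp_sub(1)[of S'] unfolding S'_def by blast+
      ultimately have "((x - t2 * u2) - t3 * u3) + t3 * u3 + t2 * u2 \<in> sp S'" using sp_add sp_mul by blast
      then show "x \<in> sp S'" by simp
    qed
    then show False using F[OF fS' S'M cS'] by blast
  qed
  have sp0: "0 \<in> sp S" for S using sp_ideal[of S] unfolding is_ideal_def by blast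
  obtain y2 where y2: "y2 \<in> M" "y2 \<notin> sp {}" using F[of "{}"] assms(8) by auto
  obtain y3 where y3: "y3 \<in> M" "y3 \<notin> sp {y2}" using F[of "{y2}"] assms(8) y2 by auto
  define K where "K = {x\<in>M. x * y2 = 0 \<and> x * y3 = 0}"
  have seq: "\<exists>xs. length xs = n \<and> (\<forall>i<n. xs!i \<in> K \<and> xs!i \<notin> sp (set (take i xs)))"
    if "n + 6 \<le> k + 1" for n
    using that
  proof (induction n)
    case 0 then show ?case by simp
  next
    case (Suc n)
    then obtain xs where xs: "length xs = n" "\<forall>i<n. xs!i \<in> K \<and> xs!i \<notin> sp (set (take i xs))" by auto
    have "set xs \<subseteq> M" using xs unfolding K_def by (auto simp: in_set_conv_nth)
    moreover have "card (set xs) + 2 < k" using card_length[of xs] xs(1) Suc.prems by linarith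
    ultimately obtain x where x: "x \<in> M" "x * y2 = 0" "x * y3 = 0" "x \<notin> sp (set xs)"
      using L[of "set xs" y2 y3] y2 y3 by blast
    show ?case
    proof (rule exI[of _ "xs @ [x]"], rule conjI)
      show "length (xs @ [x]) = Suc n" using xs by simp
    next
      show "\<forall>i<Suc n. (xs @ [x]) ! i \<in> K \<and> (xs @ [x]) ! i \<notin> sp (set (take i (xs @ [x])))"
      proof (intro allI impI)
      fix i assume i: "i < Suc n"
      show "(xs @ [x]) ! i \<in> K \<and> (xs @ [x]) ! i \<notin> sp (set (take i (xs @ [x])))"
      proof (cases "i < n")
        case True
        then show ?thesis using xs by (simp add: nth_append)
      next
        case False
        then have "i = n" using i by simp
        then show ?thesis using xs x unfolding K_def by (simp add: nth_append)
      qed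
      qed
    qed
  qed
  obtain xs where xs: "length xs = k - 5" "\<forall>i<k - 5. xs!i \<in> K \<and> xs!i \<notin> sp (set (take i xs))"
    using seq[of "k - 5"] assms(8) by auto
  define C where "C j = sp (set (take j xs))" for j
  define P where "P y = {r * y | r. True}" for y :: 'a
  have idK: "is_ideal K" unfolding K_def is_ideal_def using M0 Madd Mmul
    by (simp add: distrib_right mult.assoc)
  have KM: "K \<subseteq> M" unfolding K_def by blast
  have M2K: "M2 \<subseteq> K" unfolding K_def using M2M y2(1) y3(1) by auto (metis ann mult.commute)+
  have setK: "set xs \<subseteq> K" using xs by (auto simp: in_set_conv_nth)
  have CK: "C j \<subseteq> K" for j unfolding C_def sp_def
    using setK M2K set_take_subset[of j xs] by (intro gen_least[OF idK]) auto
  have CM: "C j \<subseteq> M" for j using CK KM by blast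
  have idC: "is_ideal (C j)" for j unfolding C_def by (rule sp_ideal)
  have xin: "xs!i \<in> C j" if "i < j" "j \<le> length xs" for i j
  proof -
    have "xs!i \<in> set (take j xs)" using that by (metis in_set_conv_nth length_take min.absorb2 nth_take order.strict_trans2)
    then show ?thesis unfolding C_def using sp_sub(1) by blast
  qed
  have xnot: "xs!i \<notin> C i" if "i < length xs" for i using xs that unfolding C_def by simp
  have nz: "a \<noteq> 0" if "a \<notin> sp S" for a S using sp0 that by metis
  have VX: "AG_vertex I" if h: "is_ideal I" "I \<subseteq> M" "a \<in> I" "a \<noteq> 0" for I a
  proof -
    have "\<forall>x\<in>I. \<forall>v\<in>M2. x * v = 0" using h(2) ann by blast
    then have "ideal_prod I M2 = {0}" unfolding ideal_prod_def
      by (intro gen_zero) blast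
    then have "annihilating_ideal I" unfolding annihilating_ideal_def using that(1) idM2 M2ne by blast
    moreover have "I \<noteq> {0}" using that by blast
    ultimately show ?thesis unfolding AG_vertex_def by blast
  qed
  have idP: "is_ideal (P y)" for y unfolding P_def by (rule principal_ideal)
  have PM: "P y \<subseteq> M" if "y \<in> M" for y unfolding P_def using Mmul that by blast
  have yP: "y \<in> P y" for y unfolding P_def by (intro CollectI exI[of _ 1]) simp
  have Psp: "P y \<subseteq> sp {y}" for y unfolding P_def using sp_sub(1)[of "{y}"] sp_mul by blast
  have notP: False if h: "y \<in> M" "a \<in> P y" "b \<in> P y" "a \<notin> sp {}" "b \<notin> sp {a}" for y a b
  proof -
    obtain r0 where r0: "a = r0 * y" using h(2) unfolding P_def by blast
    obtain r1 where r1: "b = r1 * y" using h(3) unfolding P_def by blast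
    have "r0 \<notin> M"
    proof
      assume "r0 \<in> M"
      then have "a \<in> M2" using r0 mulM2 h(1) by blast
      then show False using h(4) sp_sub(2) by blast
    qed
    then obtain s m where sm: "m \<in> M" "s * r0 + m = 1" using unit by blast
    have "b = (r1 * s) * a + r1 * (m * y)"
    proof -
      have "(r1 * s) * a + r1 * (m * y) = r1 * ((s * r0 + m) * y)" using r0 by (simp add: algebra_simps)
      then show ?thesis using sm(2) r1 by simp
    qed
    moreover have "a \<in> sp {a}" using sp_sub(1) by blast
    moreover have "m * y \<in> sp {a}" using mulM2[OF sm(1) h(1)] sp_sub(2) by blast
    ultimately have "b \<in> sp {a}" using sp_add sp_mul by metis
    then show False using h(5) by blast
  qed
  define X where "X = C ` {2..<k-4}"
  define Y where "Y = {M2, P y2, P y3}"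
  have jfacts: "xs!0 \<in> C j" "xs!1 \<in> C j" "xs!0 \<notin> sp {}" "xs!1 \<notin> sp {xs!0}" if "j \<in> {2..<k-4}" for j
  proof -
    show "xs!0 \<in> C j" "xs!1 \<in> C j" using that xin xs(1) by auto
    show "xs!0 \<notin> sp {}" using xnot[of 0] xs(1) assms(8) unfolding C_def by simp
    have "take 1 xs = [xs!0]" using xs(1) assms(8) by (cases xs) auto
    then show "xs!1 \<notin> sp {xs!0}" using xnot[of 1] xs(1) assms(8) unfolding C_def by simp
  qed
  have inj: "inj_on C {2..<k-4}"
  proof (rule inj_onI)
    fix i j assume ij: "i \<in> {2..<k-4}" "j \<in> {2..<k-4}" "C i = C j"
    show "i = j"
    proof (rule ccontr)
      assume "i \<noteq> j"
      have len: "i \<le> length xs" "j \<le> length xs" using ij(1,2) xs(1) assms(8) by auto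
      from \<open>i \<noteq> j\<close> consider "i < j" | "j < i" by linarith
      then show False
      proof cases
        case 1 then show False using xin[of i j] xnot[of i] ij(3) len by auto
      next
        case 2 then show False using xin[of j i] xnot[of j] ij(3) len by auto
      qed
    qed
  qed
  have y2nz: "y2 \<notin> M2" using y2 sp_sub(2) by blast
  have y3nz: "y3 \<notin> M2" using y3 sp_sub(2) by blast
  have Ydist: "M2 \<noteq> P y2" "M2 \<noteq> P y3" "P y2 \<noteq> P y3"
    using y2nz y3nz yP[of y2] yP[of y3] Psp[of y2] y3(2) by blast+
  have cardY: "card Y = 3" unfolding Y_def using Ydist by simp
  have cardX: "card X = k - 6" unfolding X_def using card_image[OF inj] by simp
  have XM2: "I \<noteq> M2" if "I \<in> X" for I
    using that jfacts(1,3) sp_sub(2) unfolding X_def by blast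
  have XP: "I \<noteq> P y" if "I \<in> X" "y \<in> M" for I y
    using that jfacts notP unfolding X_def by blast
  have disj: "X \<inter> Y = {}" unfolding Y_def using XM2 XP y2(1) y3(1) by blast
  have vX: "AG_vertex I" if "I \<in> X" for I
    using that VX[OF idC CM jfacts(1)] jfacts(3) nz unfolding X_def by blast
  obtain w where w: "w \<in> M2" "w \<noteq> 0" using M2ne idM2 unfolding is_ideal_def by blast
  have vY: "AG_vertex J" if "J \<in> Y" for J
  proof -
    have "AG_vertex M2" using VX[OF idM2 M2M w] .
    moreover have "AG_vertex (P y2)" using VX[OF idP PM[OF y2(1)] yP] nz y2(2) by blast
    moreover have "AG_vertex (P y3)" using VX[OF idP PM[OF y3(1)] yP] nz y3(2) by blast
    ultimately show ?thesis using that unfolding Y_def by blast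
  qed
  have adj: "AG_adj I J" if IJ: "I \<in> X" "J \<in> Y" for I J
  proof -
    obtain j where j: "I = C j" using IJ(1) unfolding X_def by blast
    have "ideal_prod I J = {0}"
    proof -
      have "x * v = 0" if xv: "x \<in> I" "v \<in> J" for x v
      proof -
        have xK: "x \<in> K" using CK j xv(1) by blast
        consider "J = M2" | "J = P y2" | "J = P y3" using \<open>J \<in> Y\<close> unfolding Y_def by blast
        then show ?thesis
        proof cases
          case 1 then show ?thesis using ann xK KM xv(2) by blast
        next
          case 2 then obtain r where "v = r * y2" using xv(2) unfolding P_def by blast
          then show ?thesis using xK unfolding K_def by (simp add: mult.left_commute)
        next
          case 3 then obtain r where "v = r * y3" using xv(2) unfolding P_def by blast
          then show ?thesis using xK unfolding K_def by (simp add: mult.left_commute)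
        qed
      qed
      then show ?thesis unfolding ideal_prod_def by (intro gen_zero) blast
    qed
    moreover have "I \<noteq> J" using disj IJ by blast
    ultimately show ?thesis unfolding AG_adj_def using vX vY IJ by blast
  qed
  have fX: "finite X" unfolding X_def by simp
  have fY: "finite Y" unfolding Y_def by simp
  have all: "finite X \<and> finite Y \<and> card X = k - 6 \<and> card Y = 3 \<and> X \<inter> Y = {} \<and>
      (\<forall>I\<in>X \<union> Y. AG_vertex I) \<and> (\<forall>I\<in>X. \<forall>J\<in>Y. AG_adj I J)"
  proof -
    have "\<forall>I\<in>X \<union> Y. AG_vertex I" using vX vY by auto
    then show ?thesis using fX fY cardX cardY disj adj by simp
  qed
  show ?thesis unfolding AG_contains_Kab_def
    by (rule exI[of _ X], rule exI[of _ Y]) (rule all)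
qed

end
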